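(* Let $J\ge5$ be an integer and let $n$ be an integer with $n\not\equiv0\pmod{2^{J-1}}$. Then $n=a+b$ for some integers $a,b$ with $a\equiv2^i\pmod{2^{i+2}}$ and $b\equiv2^j\pmod{2^{j+2}}$ for some integers $0\le i,j\le J-3$. *)

theory Defs
  imports "HOL-Number_Theory.Cong"
begin

end

theory Submission
  imports Defs
begin

lemma pow2_decomp: "(n::int) \<noteq> 0 \<Longrightarrow> \<exists>k m. n = 2^k * m \<and> odd m"
proof (induction "nat \<bar>n\<bar>" arbitrary: n rule: less_induct)
  case less
  show ?case
  proof (cases "odd n")
    case True then show ?thesis by (rule_tac x=0 in exI) auto
  next
    case False
    then obtain q where q: "n = 2*q" by auto
    with less.prems have "q \<noteq> 0" by auto
    moreover have "nat \<bar>q\<bar> < nat \<bar>n\<bar>" using q \<open>q \<noteq> 0\<close> by auto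
    ultimately obtain k m where "q = 2^k*m" "odd m" using less.hyps by blast
    then show ?thesis using q by (rule_tac x="Suc k" in exI) auto
  qed
qed

theorem lemma1:
  fixes J :: nat and n :: int
  assumes "J \<ge> 5"
    and "\<not> [n = 0] (mod (2 ^ (J - 1)))"
  shows "\<exists>a b :: int. \<exists>i j :: nat. n = a + b \<and> i \<le> J - 3 \<and> j \<le> J - 3
           \<and> [a = 2 ^ i] (mod (2 ^ (i + 2))) \<and> [b = 2 ^ j] (mod (2 ^ (j + 2)))"
proof -
  have n0: "n \<noteq> 0" using assms(2) by auto
  then obtain k m where km: "n = 2^k*m" "odd m" using pow2_decomp by blast
  show ?thesis
  proof (cases k)
    case 0
    hence no: "odd n" using km by simp
    show ?thesis
    proof (cases "n mod 4 = 1")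
      case True
      have "[n - 4 = 2^0] (mod (2^(0+2)))" using True
        by (simp add: cong_def mod_diff_eq[symmetric])
      moreover have "[4 = (2::int)^2] (mod (2^(2+2)))" by (simp add: cong_def)
      ultimately show ?thesis using assms(1)
        by (rule_tac x="n-4" in exI, rule_tac x=4 in exI, rule_tac x=0 in exI, rule_tac x=2 in exI) auto
    next
      case False
      have "n mod 4 = 3" using no False by presburger
      hence "[n - 2 = 2^0] (mod (2^(0+2)))"
        by (simp add: cong_def) presburger
      moreover have "[2 = (2::int)^1] (mod (2^(1+2)))" by (simp add: cong_def)
      ultimately show ?thesis using assms(1)
        by (rule_tac x="n-2" in exI, rule_tac x=2 in exI, rule_tac x=0 in exI, rule_tac x=1 in exI) auto
    qed
  next
    case (Suc l)
    have "k \<le> J - 2"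
    proof (rule ccontr)
      assume "\<not> k \<le> J - 2"
      hence "J - 1 \<le> k" by auto
      hence "(2::int)^(J-1) dvd 2^k" by (simp add: le_imp_power_dvd)
      hence "(2::int)^(J-1) dvd n" using km by auto
      thus False using assms(2) by (simp add: cong_0_iff)
    qed
    hence lJ: "l \<le> J - 3" using Suc by auto
    have c1: "[(2::int)^l = 2^l] (mod (2^(l+2)))" by simp
    obtain t where t: "m = 2*t+1" using km(2) by (metis oddE)
    have "2^l*(2*m-1) - 2^l = (2::int)^(l+2) * t" using t by (simp add: algebra_simps power_add)
    hence c2: "[2^l*(2*m-1) = (2::int)^l] (mod (2^(l+2)))"
      by (metis cong_iff_dvd_diff dvd_triv_left)
    have "n = 2^l + 2^l*(2*m-1)" using km Suc by (simp add: algebra_simps)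
    thus ?thesis using lJ c1 c2 by blast
  qed
qed

end
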